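(* Let $m\in\mathbb{Z}^+$, let $\lambda_0,\dots,\lambda_{m-1},c_0,\dots,c_{m-1}\in\mathbb{R}$, let $X=\{0,1\}^{\mathbb{Z}}$ and $\Omega=\mathbb{Z}_m\times X$, and let $T:\Omega\to\Omega$, $T(k,x)=(k+1 \bmod m,\,T_1x)$, where $(T_1x)_n=x_{n+1}$ is the left shift. For $E\in\mathbb{R}$ define $A_E:\Omega\to SL(2,\mathbb{R})$ by $$A_E(k,x)=\begin{bmatrix}E-\lambda_kx_0-c_k & -1\\ 1 & 0\end{bmatrix},$$ and for $n\in\mathbb{Z}^+$ and $\omega\in\Omega$ put $A^n_{E,\omega}=A_E(T^{n-1}\omega)\cdots A_E(T\omega)A_E(\omega)$ (so that $A^n_{E,(0,x)}=A(n-1)\cdots A(0)$ with $A(j)=\begin{bmatrix}E-V_x(j)&-1\\1&0\end{bmatrix}$, $V_x(j)=\lambda_{j\bmod m}x_j+c_{j\bmod m}$). Then for every $E\in\mathbb{R}$, the cocycle $(T,A_E)$ is uniformly hyperbolic if and only if the finite set of matrices $\{M: M=A^m_{E,(0,x)}\text{ for some }x\in X\}$ is uniformly hyperbolic.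
   Context: The cocycle $(T,A_E)$ is the map $\Omega\times\mathbb{R}^2\to\Omega\times\mathbb{R}^2$, $(\omega,v)\mapsto(T\omega,A_E(\omega)v)$. The cocycle is uniformly hyperbolic if there exist $\lambda>1$ and $C>0$ such that $\|A^n_{E,\omega}\|>C\lambda^n$ for all $n\in\mathbb{Z}^+$ and all $\omega\in\Omega$. A set of matrices $\mathcal{S}\subset SL(2,\mathbb{R})$ is uniformly hyperbolic if there exists $\lambda>1$ such that for every $n\ge1$ and every product $M_{1}M_{2}\cdots M_{n}$ of $n$ matrices from $\mathcal{S}$ (repetitions allowed), $\|M_1\cdots M_n\|>\lambda^n$. *)

theory Defs
  imports "HOL-Analysis.Analysis"
begin

text \<open>X = {0,1}^Z is modelled as int \<Rightarrow> bool (x_n = of_bool (x n)).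
  Omega = Z_m \<times> X is modelled as pairs (k, x) with k :: nat, k < m.\<close>

type_synonym omega = "nat \<times> (int \<Rightarrow> bool)"

definition Omega :: "nat \<Rightarrow> omega set" where
  "Omega m = {(k, x). k < m}"

definition shiftT :: "nat \<Rightarrow> omega \<Rightarrow> omega" where
  "shiftT m w = ((fst w + 1) mod m, (\<lambda>n. snd w (n + 1)))"

definition mat2 :: "real \<Rightarrow> real \<Rightarrow> real \<Rightarrow> real \<Rightarrow> real^2^2" where
  "mat2 a b c d = (\<chi> i j. if i = 1 then (if j = 1 then a else b) else (if j = 1 then c else d))"

definition A_mat :: "(nat \<Rightarrow> real) \<Rightarrow> (nat \<Rightarrow> real) \<Rightarrow> real \<Rightarrow> omega \<Rightarrow> real^2^2" where
  "A_mat lam c E w = mat2 (E - lam (fst w) * of_bool (snd w 0) - c (fst w)) (-1) 1 0"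

text \<open>cocycle_pow m lam c E n w = A_E(T^{n-1} w) ... A_E(T w) A_E(w)\<close>
fun cocycle_pow :: "nat \<Rightarrow> (nat \<Rightarrow> real) \<Rightarrow> (nat \<Rightarrow> real) \<Rightarrow> real \<Rightarrow> nat \<Rightarrow> omega \<Rightarrow> real^2^2" where
  "cocycle_pow m lam c E 0 w = mat 1"
| "cocycle_pow m lam c E (Suc n) w = A_mat lam c E ((shiftT m ^^ n) w) ** cocycle_pow m lam c E n w"

text \<open>Operator norm of a matrix (induced by the Euclidean norm).\<close>
definition mnorm :: "real^2^2 \<Rightarrow> real" where
  "mnorm M = onorm (\<lambda>v. M *v v)"

definition cocycle_UH :: "nat \<Rightarrow> (nat \<Rightarrow> real) \<Rightarrow> (nat \<Rightarrow> real) \<Rightarrow> real \<Rightarrow> bool" where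
  "cocycle_UH m lam c E \<longleftrightarrow>
     (\<exists>l C. l > 1 \<and> C > 0 \<and>
        (\<forall>n\<ge>1. \<forall>w\<in>Omega m. mnorm (cocycle_pow m lam c E n w) > C * l ^ n))"

definition matrix_set_UH :: "(real^2^2) set \<Rightarrow> bool" where
  "matrix_set_UH S \<longleftrightarrow>
     (\<exists>l. l > 1 \<and> (\<forall>n\<ge>1. \<forall>Ms. length Ms = n \<and> set Ms \<subseteq> S \<longrightarrow>
        mnorm (foldr (**) Ms (mat 1)) > l ^ n))"

end

theory Submission
  imports Defs
begin

lemma shift_pow:
  assumes "k < m"
  shows "(shiftT m ^^ a) (k, x) = ((k + a) mod m, \<lambda>n. x (n + int a))"
proof (induction a)
  case 0
  then show ?case using assms by (simp add: fun_eq_iff)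
next
  case (Suc a)
  have "(shiftT m ^^ Suc a) (k, x) = shiftT m ((shiftT m ^^ a) (k, x))" by simp
  also have "\<dots> = shiftT m ((k + a) mod m, \<lambda>n. x (n + int a))"
    using Suc.IH by simp
  also have "\<dots> = (((k + a) mod m + 1) mod m, \<lambda>n. x (n + 1 + int a))"
    unfolding shiftT_def by (simp add: add_ac)
  also have "\<dots> = ((k + Suc a) mod m, \<lambda>n. x (n + int (Suc a)))"
    by (simp add: mod_Suc_eq add.commute add.left_commute)
  finally show ?case .
qed

lemma cp_add:
  "cocycle_pow m lam c E (a + b) w =
   cocycle_pow m lam c E b ((shiftT m ^^ a) w) ** cocycle_pow m lam c E a w"
proof (induction b)
  case 0
  then show ?case by (simp add: matrix_mul_lid)
next
  case (Suc b)
  have e: "(shiftT m ^^ (a + b)) w = (shiftT m ^^ b) ((shiftT m ^^ a) w)"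
    by (subst add.commute) (simp add: funpow_add)
  show ?case using Suc by (simp add: e matrix_mul_assoc)
qed

lemma cp_local:
  assumes "k < m"
  shows "(\<forall>j. 0 \<le> j \<and> j < int N \<longrightarrow> x j = y j) \<Longrightarrow>
     cocycle_pow m lam c E N (k, x) = cocycle_pow m lam c E N (k, y)"
proof (induction N)
  case 0
  then show ?case by simp
next
  case (Suc N)
  have "x (int N) = y (int N)" using Suc.prems by simp
  then show ?case using Suc by (simp add: shift_pow[OF assms] A_mat_def)
qed

lemma mnorm_nonneg: "0 \<le> mnorm M"
  unfolding mnorm_def by (rule onorm_pos_le) simp

lemma mnorm_mult: "mnorm (A ** B) \<le> mnorm A * mnorm B"
proof -
  have "(\<lambda>v. (A ** B) *v v) = (\<lambda>v. A *v v) \<circ> (\<lambda>v. B *v v)"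
    by (simp add: fun_eq_iff matrix_vector_mul_assoc)
  then show ?thesis unfolding mnorm_def
    by (metis onorm_compose matrix_vector_mul_bounded_linear)
qed

lemma mnorm_one: "mnorm (mat 1) \<le> 1"
proof -
  have "(*v) (mat 1 :: real^2^2) = (\<lambda>x. x)" by (rule ext) (simp add: matrix_vector_mul_lid)
  then show ?thesis unfolding mnorm_def by (simp add: onorm_id_le)
qed

definition Kb :: "nat \<Rightarrow> (nat \<Rightarrow> real) \<Rightarrow> (nat \<Rightarrow> real) \<Rightarrow> real \<Rightarrow> real" where
  "Kb m lam c E = 4 * (1 + (\<Sum>k<m. \<bar>E\<bar> + \<bar>lam k\<bar> + \<bar>c k\<bar>))"

lemma Kb_ge1: "1 \<le> Kb m lam c E"
proof -
  have "0 \<le> (\<Sum>k<m. \<bar>E\<bar> + \<bar>lam k\<bar> + \<bar>c k\<bar>)" by (intro sum_nonneg) simp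
  then show ?thesis unfolding Kb_def by simp
qed

lemma A_bound:
  assumes "fst w < m"
  shows "mnorm (A_mat lam c E w) \<le> Kb m lam c E"
proof -
  define B where "B = 1 + (\<Sum>k<m. \<bar>E\<bar> + \<bar>lam k\<bar> + \<bar>c k\<bar>)"
  have s: "\<bar>E\<bar> + \<bar>lam (fst w)\<bar> + \<bar>c (fst w)\<bar> \<le> (\<Sum>k<m. \<bar>E\<bar> + \<bar>lam k\<bar> + \<bar>c k\<bar>)"
    using assms by (intro member_le_sum) auto
  have e: "\<bar>E - lam (fst w) * of_bool (snd w 0) - c (fst w)\<bar> \<le> B"
  proof -
    have "\<bar>lam (fst w) * of_bool (snd w 0)\<bar> \<le> \<bar>lam (fst w)\<bar>" by (simp add: abs_mult)
    then show ?thesis using s unfolding B_def by linarith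
  qed
  have B0: "1 \<le> B" unfolding B_def
    by (simp add: sum_nonneg)
  have "\<And>i j. \<bar>A_mat lam c E w $ i $ j\<bar> \<le> B"
    using e B0 by (simp add: A_mat_def mat2_def)
  then have "onorm ((*v) (A_mat lam c E w)) \<le> real CARD(2) * real CARD(2) * B"
    by (rule onorm_le_matrix_component)
  then show ?thesis unfolding mnorm_def Kb_def B_def by simp
qed

lemma fst_shift_lt:
  assumes "m \<ge> 1" "fst w < m"
  shows "fst ((shiftT m ^^ a) w) < m"
  using shift_pow[of "fst w" m a "snd w"] assms by (cases w) simp

lemma cp_bound:
  assumes "m \<ge> 1" "fst w < m"
  shows "mnorm (cocycle_pow m lam c E n w) \<le> Kb m lam c E ^ n"
proof (induction n)
  case 0
  then show ?case using mnorm_one by simp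
next
  case (Suc n)
  have "mnorm (cocycle_pow m lam c E (Suc n) w) \<le>
     mnorm (A_mat lam c E ((shiftT m ^^ n) w)) * mnorm (cocycle_pow m lam c E n w)"
    by (simp add: mnorm_mult)
  also have "\<dots> \<le> Kb m lam c E * Kb m lam c E ^ n"
    using Suc A_bound[OF fst_shift_lt[OF assms]] order_trans[OF zero_le_one Kb_ge1]
    by (intro mult_mono) (auto simp: mnorm_nonneg)
  finally show ?case by simp
qed

lemma blocks:
  assumes "m \<ge> 1"
  shows "\<exists>Ms. length Ms = q \<and> set Ms \<subseteq> {M. \<exists>x. M = cocycle_pow m lam c E m (0, x)} \<and>
     cocycle_pow m lam c E (q * m) (0, y) = foldr (**) Ms (mat 1)"
proof (induction q arbitrary: y)
  case 0
  then show ?case by simp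
next
  case (Suc q)
  obtain Ms where Ms: "length Ms = q" "set Ms \<subseteq> {M. \<exists>x. M = cocycle_pow m lam c E m (0, x)}"
     "cocycle_pow m lam c E (q * m) (0, y) = foldr (**) Ms (mat 1)"
    using Suc.IH by blast
  have sh: "(shiftT m ^^ (q * m)) (0, y) = (0, \<lambda>n. y (n + int (q * m)))"
    using shift_pow[of 0 m "q * m" y] assms by simp
  have "cocycle_pow m lam c E (Suc q * m) (0, y) =
     cocycle_pow m lam c E (q * m + m) (0, y)" by (simp add: add.commute)
  also have "\<dots> = cocycle_pow m lam c E m (0, \<lambda>n. y (n + int (q * m))) ** foldr (**) Ms (mat 1)"
    by (simp only: cp_add sh Ms(3))
  finally show ?case using Ms
    by (intro exI[of _ "cocycle_pow m lam c E m (0, \<lambda>n. y (n + int (q * m))) # Ms"]) auto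
qed

lemma dir2:
  assumes m1: "m \<ge> 1"
    and H: "matrix_set_UH {M. \<exists>x. M = cocycle_pow m lam c E m (0, x)}"
  shows "cocycle_UH m lam c E"
proof -
  obtain l where l1: "l > 1" and HL: "\<And>n Ms. n \<ge> 1 \<Longrightarrow> length Ms = n \<Longrightarrow>
      set Ms \<subseteq> {M. \<exists>x. M = cocycle_pow m lam c E m (0, x)} \<Longrightarrow>
        mnorm (foldr (**) Ms (mat 1)) > l ^ n"
    using H unfolding matrix_set_UH_def by blast
  define K where "K = Kb m lam c E"
  have K1: "1 \<le> K" unfolding K_def by (rule Kb_ge1)
  define l' where "l' = root m l"
  have l'1: "l' > 1" unfolding l'_def using l1 m1 by simp
  have l'm: "l' ^ m = l" unfolding l'_def using l1 m1 by simp
  define C where "C = 1 / K ^ (2 * m)"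
  have C0: "C > 0" unfolding C_def using K1 by simp
  have main: "C * l' ^ n < mnorm (cocycle_pow m lam c E n w)"
    if n1: "n \<ge> 1" and wO: "w \<in> Omega m" for n w
  proof -
    obtain k x where w: "w = (k, x)" and km: "k < m" using wO unfolding Omega_def by auto
    define x' where "x' = (\<lambda>j. x (j - int k))"
    have shk: "(shiftT m ^^ k) (0, x') = (k, x)"
      using shift_pow[of 0 m k x'] km unfolding x'_def by simp
    define q where "q = (n + k) div m"
    define N where "N = Suc q * m"
    have lt: "n + k < N" unfolding N_def q_def using m1
      by (metis add.commute div_mult_mod_eq mod_less_divisor mult.commute mult_Suc_right
          nat_add_left_cancel_less le_eq_less_or_eq less_le_trans zero_less_one)
    define s where "s = N - (n + k)"
    have Ns: "N = (n + k) + s" unfolding s_def using lt by simp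
    have sm: "s \<le> m" unfolding s_def N_def q_def using m1
      by (metis Suc_diff_le add.commute diff_le_self div_mult_mod_eq mult_Suc
          diff_add_inverse2 diff_diff_left le_add1 le_diff_conv mod_less_divisor
          nat_less_le not_less_eq_eq zero_less_one le_trans)
    have f0: "fst (0::nat, x') < m" using m1 by simp
    have eq: "cocycle_pow m lam c E N (0, x') =
      cocycle_pow m lam c E s ((shiftT m ^^ (n + k)) (0, x')) **
      (cocycle_pow m lam c E n (k, x) ** cocycle_pow m lam c E k (0, x'))"
      unfolding Ns cp_add
      by (metis add.commute cp_add shk)
    have "mnorm (cocycle_pow m lam c E N (0, x')) \<le>
      K ^ s * (mnorm (cocycle_pow m lam c E n (k, x)) * K ^ k)"
    proof -
      have a: "mnorm (cocycle_pow m lam c E s ((shiftT m ^^ (n + k)) (0, x'))) \<le> K ^ s"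
        unfolding K_def by (rule cp_bound[OF m1 fst_shift_lt[OF m1 f0]])
      have b: "mnorm (cocycle_pow m lam c E k (0, x')) \<le> K ^ k"
        unfolding K_def using cp_bound[OF m1 f0] by simp
      show ?thesis unfolding eq
        using a b mnorm_mult mnorm_nonneg K1
        by (smt (verit) mult_left_mono mult_mono zero_le_power)
    qed
    also have "\<dots> \<le> K ^ m * (mnorm (cocycle_pow m lam c E n (k, x)) * K ^ m)"
      using sm km K1 mnorm_nonneg
      by (intro mult_mono power_increasing mult_left_mono) auto
    finally have up0: "mnorm (cocycle_pow m lam c E N (0, x')) \<le>
       K ^ m * (mnorm (cocycle_pow m lam c E n (k, x)) * K ^ m)" .
    have KK: "K ^ (2 * m) = K ^ m * K ^ m" by (metis mult_2 power_add)
    have up: "mnorm (cocycle_pow m lam c E N (0, x')) \<le>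
       K ^ (2 * m) * mnorm (cocycle_pow m lam c E n (k, x))"
      using up0 unfolding KK by (simp add: mult_ac)
    obtain Ms where Ms: "length Ms = Suc q" "set Ms \<subseteq> {M. \<exists>x. M = cocycle_pow m lam c E m (0, x)}"
     "cocycle_pow m lam c E (Suc q * m) (0, x') = foldr (**) Ms (mat 1)"
      using blocks[OF m1] by blast
    have low: "l ^ Suc q < mnorm (cocycle_pow m lam c E N (0, x'))"
      unfolding N_def Ms(3) using HL[OF _ Ms(1) Ms(2)] by simp
    have "l' ^ n \<le> l' ^ N" using lt l'1 by (intro power_increasing) auto
    also have "l' ^ N = l ^ Suc q" unfolding N_def l'm[symmetric]
      by (metis power_mult mult.commute)
    finally have "l' ^ n < K ^ (2 * m) * mnorm (cocycle_pow m lam c E n (k, x))"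
      using low up by linarith
    then show ?thesis unfolding C_def w using K1
      by (simp add: field_simps)
  qed
  show ?thesis unfolding cocycle_UH_def
    using l'1 C0 main by blast
qed

lemma concat_blocks:
  assumes m1: "m \<ge> 1"
  shows "set Ms \<subseteq> {M. \<exists>x. M = cocycle_pow m lam c E m (0, x)} \<Longrightarrow>
    \<exists>z. cocycle_pow m lam c E (m * length Ms) (0, z) = foldr (**) Ms (mat 1)"
proof (induction Ms)
  case Nil
  then show ?case by simp
next
  case (Cons M Ms)
  obtain z where z: "cocycle_pow m lam c E (m * length Ms) (0, z) = foldr (**) Ms (mat 1)"
    using Cons by auto
  obtain x where x: "M = cocycle_pow m lam c E m (0, x)" using Cons.prems by auto
  define L where "L = m * length Ms"
  define z' where "z' = (\<lambda>j. if j < int L then z j else x (j - int L))"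
  have f0: "(0::nat) < m" using m1 by simp
  have sh: "(shiftT m ^^ L) (0, z') = (0, \<lambda>n. z' (n + int L))"
    using shift_pow[of 0 m L z'] m1 unfolding L_def by simp
  have a: "cocycle_pow m lam c E m (0, \<lambda>n. z' (n + int L)) = M"
    unfolding x by (rule cp_local[OF f0]) (auto simp: z'_def)
  have b: "cocycle_pow m lam c E L (0, z') = cocycle_pow m lam c E L (0, z)"
    by (rule cp_local[OF f0]) (auto simp: z'_def)
  have "cocycle_pow m lam c E (m * length (M # Ms)) (0, z') =
     cocycle_pow m lam c E (L + m) (0, z')" unfolding L_def by (simp add: add.commute)
  also have "\<dots> = M ** foldr (**) Ms (mat 1)"
    by (simp only: cp_add sh a b) (simp add: z L_def)
  finally show ?case by auto
qed

lemma dir1: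
  assumes m1: "m \<ge> 1"
    and H: "cocycle_UH m lam c E"
  shows "matrix_set_UH {M. \<exists>x. M = cocycle_pow m lam c E m (0, x)}"
proof -
  obtain l C where l1: "l > 1" and C0: "C > 0" and HC: "\<And>n w. n \<ge> 1 \<Longrightarrow> w \<in> Omega m \<Longrightarrow>
      mnorm (cocycle_pow m lam c E n w) > C * l ^ n"
    using H unfolding cocycle_UH_def by blast
  have f0: "(0::nat) < m" using m1 by simp
  have key: "l ^ N \<le> mnorm P"
    if N1: "N \<ge> 1" and z: "cocycle_pow m lam c E N (0, z) = P" and mN: "m dvd N" for N P z
  proof -
    define y where "y = (\<lambda>j. z (j mod int N))"
    have yP: "cocycle_pow m lam c E N (0, y) = P"
      unfolding z[symmetric] by (rule cp_local[OF f0]) (auto simp: y_def)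
    have pw: "mnorm (cocycle_pow m lam c E (k * N) (0, y)) \<le> mnorm P ^ k" for k
    proof (induction k)
      case 0
      then show ?case using mnorm_one by simp
    next
      case (Suc k)
      have sh: "(shiftT m ^^ (k * N)) (0, y) = (0, y)"
      proof -
        have "(shiftT m ^^ (k * N)) (0, y) = ((k * N) mod m, \<lambda>n. y (n + int (k * N)))"
          using shift_pow[of 0 m "k * N" y] m1 by simp
        also have "\<dots> = (0, y)"
          using mN by (auto simp: y_def fun_eq_iff)
        finally show ?thesis .
      qed
      have "mnorm (cocycle_pow m lam c E (Suc k * N) (0, y)) =
         mnorm (cocycle_pow m lam c E (k * N + N) (0, y))" by (simp add: add.commute)
      also have "\<dots> = mnorm (P ** cocycle_pow m lam c E (k * N) (0, y))"
        by (simp only: cp_add sh yP)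
      also have "\<dots> \<le> mnorm P * mnorm P ^ k"
        using mnorm_mult[of P] Suc mnorm_nonneg[of P]
        by (meson mult_left_mono order_trans)
      finally show ?case by simp
    qed
    show ?thesis
    proof (rule ccontr)
      assume "\<not> l ^ N \<le> mnorm P"
      then have lt: "mnorm P < l ^ N" by simp
      define r where "r = mnorm P / l ^ N"
      have lN: "l ^ N > 0" using l1 by simp
      have r0: "0 \<le> r" unfolding r_def using mnorm_nonneg lN by simp
      have r1: "r < 1" unfolding r_def using lt lN by simp
      have "(\<lambda>k. r ^ k) \<longlonglongrightarrow> 0" using r0 r1 by (intro LIMSEQ_power_zero) simp
      then have "eventually (\<lambda>k. r ^ k < C) sequentially"
        using C0 by (rule order_tendstoD(2))
      then obtain k0 where k0: "\<And>k. k \<ge> k0 \<Longrightarrow> r ^ k < C"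
        unfolding eventually_sequentially by blast
      define k where "k = Suc k0"
      have rk: "r ^ k < C" using k0[of k] unfolding k_def by linarith
      have "k * N \<ge> 1" using N1 unfolding k_def by simp
      then have "C * l ^ (k * N) < mnorm (cocycle_pow m lam c E (k * N) (0, y))"
        using HC m1 unfolding Omega_def by simp
      also have "\<dots> \<le> mnorm P ^ k" by (rule pw)
      also have "\<dots> = r ^ k * (l ^ N) ^ k"
      proof -
        have "mnorm P = r * l ^ N" unfolding r_def using lN l1 by simp
        then show ?thesis by (simp add: power_mult_distrib)
      qed
      also have "\<dots> = r ^ k * l ^ (k * N)" by (simp add: power_mult mult.commute)
      finally have "C * l ^ (k * N) < r ^ k * l ^ (k * N)" .
      moreover have "l ^ (k * N) > 0" using l1 by simp
      ultimately have "C < r ^ k" by simp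
      then show False using rk by simp
    qed
  qed
  define l' where "l' = (1 + l) / 2"
  have l'1: "l' > 1" "l' < l" unfolding l'_def using l1 by auto
  have "l' ^ n < mnorm (foldr (**) Ms (mat 1))"
    if n1: "n \<ge> 1" and len: "length Ms = n"
      and sub: "set Ms \<subseteq> {M. \<exists>x. M = cocycle_pow m lam c E m (0, x)}" for n Ms
  proof -
    obtain z where z: "cocycle_pow m lam c E (m * n) (0, z) = foldr (**) Ms (mat 1)"
      using concat_blocks[OF m1 sub] len by blast
    have "l' ^ n < l ^ n" using l'1 n1 by (intro power_strict_mono) auto
    also have "\<dots> \<le> l ^ (m * n)" using l1 m1 by (intro power_increasing) auto
    also have "\<dots> \<le> mnorm (foldr (**) Ms (mat 1))"
      using key[OF _ z] m1 n1 by simp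
    finally show ?thesis .
  qed
  then show ?thesis unfolding matrix_set_UH_def using l'1 by blast
qed

theorem lemma1:
  fixes m :: nat and lam c :: "nat \<Rightarrow> real" and E :: real
  assumes "m \<ge> 1"
  shows "cocycle_UH m lam c E \<longleftrightarrow>
         matrix_set_UH {M. \<exists>x. M = cocycle_pow m lam c E m (0, x)}"
  using dir1[OF assms] dir2[OF assms] by blast

end
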